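(* Let $\mathcal A=\{a_1,\dots,a_n\}\subset\mathbb Z^d$ with $n\ge d+2$ and $d$-dimensional convex hull. Let $\Delta_1,\dots,\Delta_p$ ($p\ge1$) be $d$-simplices of $\mathcal A$ which all occur in some (common) regular subdivision of $\mathcal A$, and let $I_k$ be the index set of the vertices of $\Delta_k$, $k=1,\dots,p$. Then the cone $\mathcal C_{\Delta_1,\dots,\Delta_p}$ of all height vectors $h\in\mathbb R^n$ inducing a regular subdivision of $\mathcal A$ containing $\Delta_1,\dots,\Delta_p$ is a nonempty open polyhedral cone defined by the linear inequalities \[ \langle d_{I_k}\cdot m^{I_k}_i,h\rangle>0\quad\text{for all }k=1,\dots,p\text{ and all } i\notin I_k, \] and the vectors $\{d_{I_k}\cdot m^{I_k}_i:\ k=1,\dots,p,\ i\notin I_k\}$ generate the kernel of $A$.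
   Context: Let $A\in\mathbb Z^{(d+1)\times n}$ be the matrix whose $j$-th column is $(1,a_j)^t$, and for $h\in\mathbb R^n$ let $A_h$ be $A$ with the extra last row $h$. A $d$-simplex of $\mathcal A$ is a subset of $d+1$ affinely independent points. For an index set $I=\{i_1<\dots<i_{d+1}\}$ of a $d$-simplex, $d_I$ is the determinant of the columns of $A$ indexed by $I$; for $i\notin I$, $d_{I\cup\{i\}}(h)$ is the determinant of the columns of $A_h$ indexed by $I\cup\{i\}$ times the sign of the permutation sending the increasingly ordered $I\cup\{i\}$ to $(i_1,\dots,i_{d+1},i)$, and $m^I_i\in\mathbb R^n$ is the vector with $d_{I\cup\{i\}}(h)=\langle m^I_i,h\rangle$ for all $h$. Regular subdivisions: for $h\in\mathbb R^n$, lift $a_j$ to $(a_j,h_j)$; lower faces of the convex hull of the lifted points are faces with an inner normal having positive last coordinate; each lower face $F$ gives the cell $\{a_j:(a_j,h_j)\in F\}$, and the collection of cells is the regular subdivision induced by $h$. A simplex occurs in / is contained in a subdivision if it is one of its cells. *)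

theory Defs
  imports Complex_Main "Jordan_Normal_Form.Determinant"
begin

(* Conventions: the points a_1..a_n are indexed 0..n-1; a point a j :: nat => int
   has coordinates a j 0, ..., a j (d-1) (values at r >= d are irrelevant).
   Vectors of R^n are functions nat => real considered on {0..<n}. *)

definition Amat :: "(nat \<Rightarrow> nat \<Rightarrow> int) \<Rightarrow> nat \<Rightarrow> nat \<Rightarrow> real" where
  "Amat a r j = (if r = 0 then 1 else real_of_int (a j (r - 1)))"

definition Ahmat :: "(nat \<Rightarrow> nat \<Rightarrow> int) \<Rightarrow> nat \<Rightarrow> (nat \<Rightarrow> real) \<Rightarrow> nat \<Rightarrow> nat \<Rightarrow> real" where
  "Ahmat a d h r j = (if r \<le> d then Amat a r j else h j)"

definition aff_indep :: "(nat \<Rightarrow> nat \<Rightarrow> int) \<Rightarrow> nat \<Rightarrow> nat set \<Rightarrow> bool" where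
  "aff_indep a d I \<longleftrightarrow>
     (\<forall>c :: nat \<Rightarrow> real. (\<Sum>i\<in>I. c i) = 0 \<and> (\<forall>r<d. (\<Sum>i\<in>I. c i * real_of_int (a i r)) = 0)
        \<longrightarrow> (\<forall>i\<in>I. c i = 0))"

definition is_simplex :: "(nat \<Rightarrow> nat \<Rightarrow> int) \<Rightarrow> nat \<Rightarrow> nat \<Rightarrow> nat set \<Rightarrow> bool" where
  "is_simplex a n d I \<longleftrightarrow> I \<subseteq> {0..<n} \<and> card I = d + 1 \<and> aff_indep a d I"

definition full_dim :: "(nat \<Rightarrow> nat \<Rightarrow> int) \<Rightarrow> nat \<Rightarrow> nat \<Rightarrow> bool" where
  "full_dim a n d \<longleftrightarrow> (\<exists>I. is_simplex a n d I)"

definition dI :: "(nat \<Rightarrow> nat \<Rightarrow> int) \<Rightarrow> nat \<Rightarrow> nat set \<Rightarrow> real" where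
  "dI a d I = det (mat (d + 1) (d + 1)
      (\<lambda>(r, c). Amat a r (sorted_list_of_set I ! c)))"

text \<open>d_{I \<union> {i}}(h): determinant of the columns of A_h taken in the order
  (i_1, ..., i_{d+1}, i); this equals the determinant with increasingly ordered
  columns times the sign of the permutation sorting -> (i_1,...,i_{d+1},i).\<close>
definition dIi :: "(nat \<Rightarrow> nat \<Rightarrow> int) \<Rightarrow> nat \<Rightarrow> nat set \<Rightarrow> nat \<Rightarrow> (nat \<Rightarrow> real) \<Rightarrow> real" where
  "dIi a d I i h = det (mat (d + 2) (d + 2)
      (\<lambda>(r, c). Ahmat a d h r ((sorted_list_of_set I @ [i]) ! c)))"

definition ip :: "nat \<Rightarrow> (nat \<Rightarrow> real) \<Rightarrow> (nat \<Rightarrow> real) \<Rightarrow> real" where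
  "ip n x y = (\<Sum>j<n. x j * y j)"

definition in_Rn :: "nat \<Rightarrow> (nat \<Rightarrow> real) \<Rightarrow> bool" where
  "in_Rn n x \<longleftrightarrow> (\<forall>j\<ge>n. x j = 0)"

definition mIi :: "(nat \<Rightarrow> nat \<Rightarrow> int) \<Rightarrow> nat \<Rightarrow> nat \<Rightarrow> nat set \<Rightarrow> nat \<Rightarrow> (nat \<Rightarrow> real)" where
  "mIi a n d I i = (THE m. in_Rn n m \<and> (\<forall>h. dIi a d I i h = ip n m h))"

text \<open>Cells of the regular subdivision induced by h (as index sets): for every lower
  face F of the convex hull of the lifted points (a_j, h_j), i.e. a face with inner
  normal (c, t), t > 0 (the set where the linear functional attains its minimum),
  the cell {j. (a_j,h_j) \<in> F}.\<close>
definition reg_subdiv :: "(nat \<Rightarrow> nat \<Rightarrow> int) \<Rightarrow> nat \<Rightarrow> nat \<Rightarrow> (nat \<Rightarrow> real) \<Rightarrow> nat set set" where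
  "reg_subdiv a n d h =
     {J. \<exists>(c :: nat \<Rightarrow> real) (t :: real). t > 0 \<and>
          J = {j. j < n \<and> (\<forall>k<n.
                 (\<Sum>r<d. c r * real_of_int (a j r)) + t * h j
               \<le> (\<Sum>r<d. c r * real_of_int (a k r)) + t * h k)}}"

definition kerA :: "(nat \<Rightarrow> nat \<Rightarrow> int) \<Rightarrow> nat \<Rightarrow> nat \<Rightarrow> (nat \<Rightarrow> real) set" where
  "kerA a n d = {x. in_Rn n x \<and> (\<forall>r\<le>d. (\<Sum>j<n. Amat a r j * x j) = 0)}"

end

theory Submission
  imports Defs
begin

definition MI :: "(nat \<Rightarrow> nat \<Rightarrow> int) \<Rightarrow> nat \<Rightarrow> nat set \<Rightarrow> real mat" where
  "MI a d I = mat (d + 1) (d + 1) (\<lambda>(r, c). Amat a r (sorted_list_of_set I ! c))"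
definition Mh :: "(nat \<Rightarrow> nat \<Rightarrow> int) \<Rightarrow> nat \<Rightarrow> nat set \<Rightarrow> nat \<Rightarrow> (nat \<Rightarrow> real) \<Rightarrow> real mat" where
  "Mh a d I i h = mat (d + 2) (d + 2) (\<lambda>(r, c). Ahmat a d h r ((sorted_list_of_set I @ [i]) ! c))"
definition cof :: "(nat \<Rightarrow> nat \<Rightarrow> int) \<Rightarrow> nat \<Rightarrow> nat set \<Rightarrow> nat \<Rightarrow> nat \<Rightarrow> real" where
  "cof a d I i c = cofactor (Mh a d I i (\<lambda>_. 0)) (d+1) c"

lemma sum_nth_distinct: "distinct s \<Longrightarrow> (\<Sum>j\<in>set s. f j) = (\<Sum>c<length s. f (s!c))"
  by (simp add: sum.distinct_set_conv_list sum_list_sum_nth atLeast0LessThan)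

lemma laplace_last:
  "dIi a d I i h = (\<Sum>c<d+2. h ((sorted_list_of_set I @ [i]) ! c) * cof a d I i c)"
proof -
  have "dIi a d I i h = det (Mh a d I i h)" unfolding dIi_def Mh_def ..
  also have "\<dots> = (\<Sum>c<d+2. Mh a d I i h $$ (d+1,c) * cofactor (Mh a d I i h) (d+1) c)"
    by (rule laplace_expansion_row, auto simp: Mh_def)
  also have "\<dots> = (\<Sum>c<d+2. h ((sorted_list_of_set I @ [i]) ! c) * cof a d I i c)"
  proof (rule sum.cong[OF refl])
    fix c assume c: "c \<in> {..<d+2}"
    have "mat_delete (Mh a d I i h) (d+1) c = mat_delete (Mh a d I i (\<lambda>_. 0)) (d+1) c"
      by (rule eq_matI, auto simp: mat_delete_def Mh_def Ahmat_def)
    then show "Mh a d I i h $$ (d+1,c) * cofactor (Mh a d I i h) (d+1) c = h ((sorted_list_of_set I @ [i]) ! c) * cof a d I i c"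
      using c by (simp add: cofactor_def Mh_def Ahmat_def cof_def)
  qed
  finally show ?thesis .
qed

lemma slist:
  assumes "(I::nat set) \<subseteq> {0..<(n::nat)}" "card I = d + 1"
  shows "length (sorted_list_of_set I) = d + 1" "distinct (sorted_list_of_set I)"
    "set (sorted_list_of_set I) = I" "finite I"
proof -
  show f: "finite I" using assms(1) by (rule finite_subset) simp
  show "length (sorted_list_of_set I) = d + 1" using assms(2) by (simp add: length_sorted_list_of_set)
  show "distinct (sorted_list_of_set I)" by simp
  show "set (sorted_list_of_set I) = I" using f by simp
qed

lemma mIi_eq:
  assumes I: "I \<subseteq> {0..<n}" "card I = d + 1" and i: "i < n"
  shows "mIi a n d I i = (\<lambda>j. if j < n then (\<Sum>c<d+2. if (sorted_list_of_set I @ [i]) ! c = j then cof a d I i c else 0) else 0)"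
    (is "_ = ?m") and "\<forall>h. ip n (mIi a n d I i) h = dIi a d I i h"
proof -
  let ?s = "sorted_list_of_set I"
  let ?col = "?s @ [i]"
  note sl = slist[OF I]
  have colr: "?col ! c < n" if "c < d + 2" for c
  proof (cases "c < d + 1")
    case True
    then have "?s ! c \<in> I" using sl by (metis nth_mem)
    then show ?thesis using True I by (auto simp: nth_append sl I(2))
  next
    case False
    then have "c = d + 1" using that by auto
    then show ?thesis using i sl by (simp add: nth_append)
  qed
  have ipm: "ip n ?m h = dIi a d I i h" for h
  proof -
    have "ip n ?m h = (\<Sum>j<n. \<Sum>c<d+2. (if ?col ! c = j then cof a d I i c * h j else 0))"
      unfolding ip_def
    proof (rule sum.cong[OF refl])
      fix j assume "j \<in> {..<n}"
      then have jn: "j < n" by simp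
      have "?m j * h j = (\<Sum>c<d+2. if ?col ! c = j then cof a d I i c else 0) * h j"
        by (simp only: jn if_True)
      also have "\<dots> = (\<Sum>c<d+2. (if ?col ! c = j then cof a d I i c * h j else 0))"
        by (simp only: sum_distrib_right, rule sum.cong, auto)
      finally show "?m j * h j = (\<Sum>c<d+2. (if ?col ! c = j then cof a d I i c * h j else 0))" .
    qed
    also have "\<dots> = (\<Sum>c<d+2. \<Sum>j<n. (if ?col ! c = j then cof a d I i c * h j else 0))"
      by (rule sum.swap)
    also have "\<dots> = (\<Sum>c<d+2. h (?col ! c) * cof a d I i c)"
      by (rule sum.cong, auto simp: colr sum.delta' if_distrib cong: if_cong) 
    finally show ?thesis using laplace_last by simp
  qed
  show eq: "mIi a n d I i = ?m" unfolding mIi_def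
  proof (rule the_equality)
    show "in_Rn n ?m \<and> (\<forall>h. dIi a d I i h = ip n ?m h)" using ipm by (auto simp: in_Rn_def)
  next
    fix m assume m: "in_Rn n m \<and> (\<forall>h. dIi a d I i h = ip n m h)"
    show "m = ?m"
    proof
      fix j
      show "m j = ?m j"
      proof (cases "j < n")
        case False then show ?thesis using m by (auto simp: in_Rn_def)
      next
        case True
        let ?h = "\<lambda>k. if k = j then 1 else (0::real)"
        have "ip n m ?h = ip n ?m ?h" using m ipm by metis
        moreover have "ip n g ?h = g j" for g using True by (simp add: ip_def if_distrib cong: if_cong)
        ultimately show ?thesis by simp
      qed
    qed
  qed
  then show "\<forall>h. ip n (mIi a n d I i) h = dIi a d I i h" using ipm by simp
qed


lemma mIi_zero:
  assumes I: "I \<subseteq> {0..<n}" "card I = d + 1" and i: "i < n" and j: "j \<notin> I" "j \<noteq> i"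
  shows "mIi a n d I i j = 0"
proof -
  note sl = slist[OF I]
  have "(sorted_list_of_set I @ [i]) ! c \<noteq> j" if "c < d + 2" for c
  proof (cases "c < d + 1")
    case True
    then have "sorted_list_of_set I ! c \<in> I" using sl by (metis nth_mem)
    then show ?thesis using True j by (auto simp: nth_append sl I(2))
  next
    case False
    then have "c = d + 1" using that by auto
    then show ?thesis using j sl by (simp add: nth_append I(2))
  qed
  then show ?thesis unfolding mIi_eq(1)[OF I i] by (simp del: lessThan_Suc add_2_eq_Suc')
qed

lemma mIi_i:
  assumes I: "I \<subseteq> {0..<n}" "card I = d + 1" and i: "i < n" "i \<notin> I"
  shows "mIi a n d I i i = dI a d I"
proof -
  note sl = slist[OF I]
  let ?col = "sorted_list_of_set I @ [i]"
  have "(\<Sum>c<d+2. if ?col ! c = i then cof a d I i c else 0) = (\<Sum>c<d+2. if c = d + 1 then cof a d I i c else 0)"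
  proof (rule sum.cong[OF refl])
    fix c assume c: "c \<in> {..<d+2}"
    show "(if ?col ! c = i then cof a d I i c else 0) = (if c = d + 1 then cof a d I i c else 0)"
    proof (cases "c < d + 1")
      case True
      then have "sorted_list_of_set I ! c \<in> I" using sl by (metis nth_mem)
      then show ?thesis using True i by (auto simp: nth_append sl I(2))
    next
      case False
      then have "c = d + 1" using c by auto
      then show ?thesis using sl by (simp add: nth_append I(2))
    qed
  qed
  also have "\<dots> = cof a d I i (d+1)" by (simp del: lessThan_Suc add_2_eq_Suc')
  also have "\<dots> = dI a d I"
  proof -
    have "mat_delete (Mh a d I i (\<lambda>_. 0)) (d+1) (d+1) = mat (d + 1) (d + 1) (\<lambda>(r, c). Amat a r (sorted_list_of_set I ! c))"
      by (rule eq_matI, auto simp: mat_delete_def Mh_def Ahmat_def nth_append sl I(2))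
    moreover have "(-1::real)^(d+1+(d+1)) = 1" by (simp add: power_add power_mult_distrib[symmetric] flip: mult_2)
    ultimately show ?thesis unfolding cof_def cofactor_def dI_def by simp
  qed
  finally show ?thesis unfolding mIi_eq(1)[OF I(1,2) i(1)] using i by simp
qed

lemma mIi_row:
  assumes I: "I \<subseteq> {0..<n}" "card I = d + 1" and i: "i < n" and r: "r \<le> d"
  shows "ip n (mIi a n d I i) (Amat a r) = 0"
proof -
  have "\<forall>h. ip n (mIi a n d I i) h = dIi a d I i h" by (rule mIi_eq(2)[OF I i])
  then have "ip n (mIi a n d I i) (Amat a r) = det (Mh a d I i (Amat a r))"
    unfolding dIi_def Mh_def by simp
  also have "\<dots> = 0"
  proof (rule det_identical_rows[of _ "d+2" r "d+1"])
    show "Mh a d I i (Amat a r) \<in> carrier_mat (d+2) (d+2)" by (simp add: Mh_def)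
    show "r \<noteq> d + 1" "r < d + 2" "d + 1 < d + 2" using r by auto
    show "row (Mh a d I i (Amat a r)) r = row (Mh a d I i (Amat a r)) (d + 1)"
    proof (rule eq_vecI)
      have r2: "r < Suc (Suc d)" using r by simp
      fix c assume "c < dim_vec (row (Mh a d I i (Amat a r)) (d + 1))"
      then have c: "c < Suc (Suc d)" by (simp add: Mh_def)
      show "row (Mh a d I i (Amat a r)) r $ c = row (Mh a d I i (Amat a r)) (d + 1) $ c"
        using r r2 c by (simp add: Mh_def Ahmat_def)
    qed (simp add: Mh_def)
  qed
  finally show ?thesis .
qed


lemma MI_carrier: "MI a d I \<in> carrier_mat (d+1) (d+1)" by (simp add: MI_def)

lemma dI_nz:
  assumes I: "I \<subseteq> {0..<n}" "card I = d + 1" and ai: "aff_indep a d I"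
  shows "dI a d I \<noteq> 0"
proof
  assume "dI a d I = 0"
  then have "det (MI a d I) = 0" unfolding dI_def MI_def .
  then obtain v where v: "v \<in> carrier_vec (d+1)" "v \<noteq> 0\<^sub>v (d+1)" "MI a d I *\<^sub>v v = 0\<^sub>v (d+1)"
    using det_0_iff_vec_prod_zero_field[OF MI_carrier] by blast
  note sl = slist[OF I]
  let ?s = "sorted_list_of_set I"
  define cc where "cc j = (if j \<in> I then v $ (SOME c. c < d + 1 \<and> ?s ! c = j) else 0)" for j
  have ccs: "cc (?s ! c) = v $ c" if c: "c < d + 1" for c
  proof -
    have inI: "?s ! c \<in> I" using sl c by (metis nth_mem)
    have "(SOME c'. c' < d + 1 \<and> ?s ! c' = ?s ! c) = c"
    proof (rule some_equality)
      show "c < d + 1 \<and> ?s ! c = ?s ! c" using c by simp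
      fix c' assume "c' < d + 1 \<and> ?s ! c' = ?s ! c"
      then show "c' = c" using c sl nth_eq_iff_index_eq by metis
    qed
    then show ?thesis unfolding cc_def using inI by simp
  qed
  have sumI: "(\<Sum>j\<in>I. f j) = (\<Sum>c<d+1. f (?s ! c))" for f
    using sum_nth_distinct[OF sl(2), of f] sl by simp
  have rowz: "(\<Sum>j\<in>I. cc j * Amat a r j) = 0" if r: "r < d + 1" for r
  proof -
    have "(\<Sum>j\<in>I. cc j * Amat a r j) = (\<Sum>c<d+1. v $ c * Amat a r (?s ! c))"
      unfolding sumI by (rule sum.cong, auto simp: ccs)
    also have "\<dots> = (MI a d I *\<^sub>v v) $ r"
      using r v(1) by (auto simp: MI_def scalar_prod_def mult.commute intro!: sum.cong)
    also have "\<dots> = 0" using v(3) r by simp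
    finally show ?thesis .
  qed
  have A1: "(\<Sum>j\<in>I. cc j) = 0" using rowz[of 0] by (simp add: Amat_def)
  have A2: "\<forall>r<d. (\<Sum>j\<in>I. cc j * real_of_int (a j r)) = 0"
  proof (intro allI impI)
    fix r assume "r < d"
    then have "(\<Sum>j\<in>I. cc j * Amat a (Suc r) j) = 0" using rowz by simp
    then show "(\<Sum>j\<in>I. cc j * real_of_int (a j r)) = 0" by (simp add: Amat_def)
  qed
  have "\<forall>j\<in>I. cc j = 0" using ai A1 A2 unfolding aff_indep_def by blast
  then have "v = 0\<^sub>v (d+1)"
  proof (intro eq_vecI)
    fix c assume "c < dim_vec (0\<^sub>v (d+1))"
    then have c: "c < d + 1" by simp
    then have "?s ! c \<in> I" using sl by (metis nth_mem)
    then show "v $ c = 0\<^sub>v (d+1) $ c" using ccs[OF c] c \<open>\<forall>j\<in>I. cc j = 0\<close> by simp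
  qed (use v(1) in simp)
  with v(2) show False by simp
qed

lemma interp:
  assumes I: "I \<subseteq> {0..<n}" "card I = d + 1" and ai: "aff_indep a d I"
  shows "\<exists>l. \<forall>j\<in>I. h j = (\<Sum>r<d+1. l r * Amat a r j)"
proof -
  note sl = slist[OF I]
  let ?s = "sorted_list_of_set I"
  define N where "N = transpose_mat (MI a d I)"
  have N: "N \<in> carrier_mat (d+1) (d+1)" unfolding N_def using MI_carrier by simp
  have dN: "det N \<noteq> 0" unfolding N_def det_transpose[OF MI_carrier]
    using dI_nz[OF I ai] unfolding dI_def MI_def .
  define hv where "hv = vec (d+1) (\<lambda>c. h (?s ! c))"
  define lv where "lv = (1 / det N) \<cdot>\<^sub>v (adj_mat N *\<^sub>v hv)"
  have hv: "hv \<in> carrier_vec (d+1)" unfolding hv_def by simp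
  have lvc: "lv \<in> carrier_vec (d+1)" unfolding lv_def using adj_mat(1)[OF N] hv by simp
  have adj: "adj_mat N \<in> carrier_mat (d+1) (d+1)" using adj_mat(1)[OF N] .
  have "N *\<^sub>v lv = (1 / det N) \<cdot>\<^sub>v (N *\<^sub>v (adj_mat N *\<^sub>v hv))"
    unfolding lv_def by (rule mult_mat_vec[OF N], insert adj hv, simp)
  also have "N *\<^sub>v (adj_mat N *\<^sub>v hv) = (N * adj_mat N) *\<^sub>v hv"
    using N adj hv by simp
  also have "\<dots> = det N \<cdot>\<^sub>v hv"
  proof -
    have "det N \<cdot>\<^sub>v hv = det N \<cdot>\<^sub>v (1\<^sub>m (d+1) *\<^sub>v hv)" using hv by auto
    also have "\<dots> = (det N \<cdot>\<^sub>m 1\<^sub>m (d+1)) *\<^sub>v hv" using hv by auto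
    finally show ?thesis unfolding adj_mat(2)[OF N] by simp
  qed
  finally have Nl: "N *\<^sub>v lv = hv" using dN by (simp add: smult_smult_assoc)
  show ?thesis
  proof (intro exI ballI)
    fix j assume j: "j \<in> I"
    then obtain c where c: "c < d + 1" "j = ?s ! c" using sl by (metis in_set_conv_nth)
    have "h j = hv $ c" using c unfolding hv_def by simp
    also have "\<dots> = (N *\<^sub>v lv) $ c" using Nl by simp
    also have "\<dots> = (\<Sum>r\<in>{0..<d+1}. N $$ (c, r) * lv $ r)"
      using c N lvc by (simp add: scalar_prod_def)
    also have "\<dots> = (\<Sum>r<d+1. lv $ r * Amat a r j)"
      unfolding atLeast0LessThan
    proof (rule sum.cong[OF refl])
      fix r assume "r \<in> {..<d+1}"
      then show "N $$ (c, r) * lv $ r = lv $ r * Amat a r j"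
        using c unfolding N_def by (simp add: MI_def)
    qed
    finally show "h j = (\<Sum>r<d+1. (\<lambda>r. lv $ r) r * Amat a r j)" by simp
  qed
qed


lemma sum_shift1: "(\<Sum>r<d+1. f r) = f 0 + (\<Sum>r<d. f (Suc r))"
  by (simp only: Suc_eq_plus1[symmetric] sum.lessThan_Suc_shift)

lemma ip_scale: "ip n (\<lambda>j. D * m j) h = D * ip n m h"
  unfolding ip_def by (simp add: sum_distrib_left mult.assoc)

lemma ip_lin: "ip n m (\<lambda>j. t * h j + g j) = t * ip n m h + ip n m g"
  unfolding ip_def by (simp add: sum_distrib_left sum.distrib algebra_simps)

lemma ip_comb:
  assumes I: "I \<subseteq> {0..<n}" "card I = d + 1" and i: "i < n"
  shows "ip n (mIi a n d I i) (\<lambda>j. \<Sum>r<d+1. l r * Amat a r j) = 0"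
proof -
  have "ip n (mIi a n d I i) (\<lambda>j. \<Sum>r<d+1. l r * Amat a r j)
      = (\<Sum>r<d+1. l r * ip n (mIi a n d I i) (Amat a r))"
    unfolding ip_def by (simp add: sum_distrib_left sum_distrib_right algebra_simps sum.swap[of _ "{..<n}"] del: lessThan_Suc)
  also have "\<dots> = 0" using mIi_row[OF I i] by simp
  finally show ?thesis .
qed

lemma ip_supp:
  assumes I: "I \<subseteq> {0..<n}" "card I = d + 1" and i: "i < n" "i \<notin> I" and g: "\<forall>j\<in>I. g j = 0"
  shows "ip n (mIi a n d I i) g = dI a d I * g i"
proof -
  have "ip n (mIi a n d I i) g = (\<Sum>j<n. if j = i then dI a d I * g i else 0)"
    unfolding ip_def
  proof (rule sum.cong[OF refl])
    fix j assume "j \<in> {..<n}"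
    show "mIi a n d I i j * g j = (if j = i then dI a d I * g i else 0)"
      using mIi_zero[OF I i(1), of j] mIi_i[OF I i] g by auto
  qed
  also have "\<dots> = dI a d I * g i" using i by simp
  finally show ?thesis .
qed

lemma char:
  assumes S: "is_simplex a n d I"
  shows "I \<in> reg_subdiv a n d h \<longleftrightarrow> (\<forall>i\<in>{0..<n}-I. ip n (\<lambda>j. dI a d I * mIi a n d I i j) h > 0)"
proof -
  have I: "I \<subseteq> {0..<n}" "card I = d + 1" and ai: "aff_indep a d I" using S by (auto simp: is_simplex_def)
  note sl = slist[OF I]
  have D: "dI a d I \<noteq> 0" using dI_nz[OF I ai] .
  have sqpos: "dI a d I * dI a d I > 0" using D by (auto simp: zero_less_mult_iff)
  have ne: "I \<noteq> {}" using I(2) by auto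
  then obtain j0 where j0: "j0 \<in> I" by auto
  show ?thesis
  proof
    assume "I \<in> reg_subdiv a n d h"
    then obtain c t where t: "t > 0" and Ieq: "I = {j. j < n \<and> (\<forall>k<n.
                 (\<Sum>r<d. c r * real_of_int (a j r)) + t * h j
               \<le> (\<Sum>r<d. c r * real_of_int (a k r)) + t * h k)}"
      unfolding reg_subdiv_def by blast
    define F where "F j = (\<Sum>r<d. c r * real_of_int (a j r)) + t * h j" for j
    have Ieq': "I = {j. j < n \<and> (\<forall>k<n. F j \<le> F k)}" using Ieq unfolding F_def by simp
    define mu where "mu = F j0"
    have j0n: "j0 < n" and j0min: "\<forall>k<n. F j0 \<le> F k" using j0 Ieq' by auto
    have FI: "F j = mu" if "j \<in> I" for j
      using that Ieq' j0n j0min unfolding mu_def by (smt (verit) mem_Collect_eq)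
    have Fout: "F i > mu" if "i < n" "i \<notin> I" for i
    proof -
      from that Ieq' obtain k where "k < n" "\<not> F i \<le> F k" by auto
      then show ?thesis using j0min unfolding mu_def by force
    qed
    define l where "l r = (if r = 0 then - mu else c (r - 1))" for r
    have Fl: "F j - mu = t * h j + (\<Sum>r<d+1. l r * Amat a r j)" for j
      unfolding sum_shift1 by (simp add: F_def l_def Amat_def)
    show "\<forall>i\<in>{0..<n}-I. ip n (\<lambda>j. dI a d I * mIi a n d I i j) h > 0"
    proof
      fix i assume "i \<in> {0..<n} - I"
      then have i: "i < n" "i \<notin> I" by auto
      have "ip n (mIi a n d I i) (\<lambda>j. F j - mu) = dI a d I * (F i - mu)"
        by (rule ip_supp[OF I i], simp add: FI)
      moreover have "ip n (mIi a n d I i) (\<lambda>j. F j - mu) = t * ip n (mIi a n d I i) h"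
        unfolding Fl ip_lin ip_comb[OF I i(1)] by simp
      ultimately have E: "t * ip n (mIi a n d I i) h = dI a d I * (F i - mu)" by simp
      have "t * (dI a d I * ip n (mIi a n d I i) h) = dI a d I * (t * ip n (mIi a n d I i) h)"
        by (simp add: mult_ac)
      also have "\<dots> = dI a d I * dI a d I * (F i - mu)" unfolding E by (simp add: mult.assoc)
      finally have "t * (dI a d I * ip n (mIi a n d I i) h) = dI a d I * dI a d I * (F i - mu)" .
      moreover have "dI a d I * dI a d I * (F i - mu) > 0" using sqpos Fout[OF i] by simp
      ultimately have "t * (dI a d I * ip n (mIi a n d I i) h) > 0" by linarith
      then have "dI a d I * ip n (mIi a n d I i) h > 0" using t by (simp add: zero_less_mult_iff)
      then show "ip n (\<lambda>j. dI a d I * mIi a n d I i j) h > 0" by (simp add: ip_scale)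
    qed
  next
    assume pos: "\<forall>i\<in>{0..<n}-I. ip n (\<lambda>j. dI a d I * mIi a n d I i j) h > 0"
    obtain l where l: "\<forall>j\<in>I. h j = (\<Sum>r<d+1. l r * Amat a r j)" using interp[OF I ai] by blast
    define g where "g j = h j - (\<Sum>r<d+1. l r * Amat a r j)" for j
    have g0: "\<forall>j\<in>I. g j = 0" using l unfolding g_def by simp
    have gpos: "g i > 0" if i: "i < n" "i \<notin> I" for i
    proof -
      have "h = (\<lambda>j. 1 * g j + (\<Sum>r<d+1. l r * Amat a r j))" unfolding g_def by simp
      moreover have "ip n (mIi a n d I i) (\<lambda>j. 1 * g j + (\<Sum>r<d+1. l r * Amat a r j))
          = 1 * ip n (mIi a n d I i) g + ip n (mIi a n d I i) (\<lambda>j. \<Sum>r<d+1. l r * Amat a r j)"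
        by (rule ip_lin)
      moreover have "ip n (mIi a n d I i) (\<lambda>j. \<Sum>r<d+1. l r * Amat a r j) = 0"
        by (rule ip_comb[OF I i(1)])
      ultimately have "ip n (mIi a n d I i) h = ip n (mIi a n d I i) g" by simp
      also have "\<dots> = dI a d I * g i" by (rule ip_supp[OF I i g0])
      finally have eqg: "ip n (mIi a n d I i) h = dI a d I * g i" .
      have "i \<in> {0..<n} - I" using i by simp
      then have "0 < ip n (\<lambda>j. dI a d I * mIi a n d I i j) h" using pos by blast
      then have "0 < dI a d I * ip n (mIi a n d I i) h" by (simp only: ip_scale)
      then have "dI a d I * (dI a d I * g i) > 0" unfolding eqg .
      then have "(dI a d I * dI a d I) * g i > 0" by (simp add: mult.assoc)
      moreover have "dI a d I * dI a d I > 0" using sqpos by simp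
      ultimately show ?thesis by (simp add: zero_less_mult_iff)
    qed
    have gnn: "g k \<ge> 0" if "k < n" for k using that g0 gpos by (cases "k \<in> I") (auto, meson less_imp_le)
    define c where "c r = - l (Suc r)" for r
    have Fg: "(\<Sum>r<d. c r * real_of_int (a j r)) + 1 * h j = g j + l 0" for j
      unfolding g_def sum_shift1 by (simp add: c_def Amat_def sum_negf)
    have "I = {j. j < n \<and> (\<forall>k<n.
                 (\<Sum>r<d. c r * real_of_int (a j r)) + 1 * h j
               \<le> (\<Sum>r<d. c r * real_of_int (a k r)) + 1 * h k)}"
      unfolding Fg
    proof (rule equalityI; rule subsetI)
      fix j assume j: "j \<in> I"
      then show "j \<in> {j. j < n \<and> (\<forall>k<n. g j + l 0 \<le> g k + l 0)}" using I g0 gnn by auto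
    next
      fix j assume "j \<in> {j. j < n \<and> (\<forall>k<n. g j + l 0 \<le> g k + l 0)}"
      then have "j < n" "g j \<le> g j0" using j0 I by auto
      then show "j \<in> I" using gpos[of j] g0 j0 by force
    qed
    then show "I \<in> reg_subdiv a n d h" unfolding reg_subdiv_def
      by (intro CollectI exI[of _ c] exI[of _ "1::real"]) simp
  qed
qed


lemma reg_cong:
  assumes "\<forall>j<n. h j = h' j"
  shows "reg_subdiv a n d h = reg_subdiv a n d h'"
proof -
  have "\<And>c t. {j. j < n \<and> (\<forall>k<n. (\<Sum>r<d. c r * real_of_int (a j r)) + t * h j
               \<le> (\<Sum>r<d. c r * real_of_int (a k r)) + t * h k)}
      = {j. j < n \<and> (\<forall>k<n. (\<Sum>r<d. c r * real_of_int (a j r)) + t * h' j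
               \<le> (\<Sum>r<d. c r * real_of_int (a k r)) + t * h' k)}"
    using assms by auto
  then show ?thesis unfolding reg_subdiv_def by simp
qed

lemma mIi_out:
  assumes I: "I \<subseteq> {0..<n}" "card I = d + 1" and i: "i < n" and j: "\<not> j < n"
  shows "mIi a n d I i j = 0"
  using j unfolding mIi_eq(1)[OF I i] by simp

lemma comb_ker:
  assumes S: "\<forall>k<p. is_simplex a n d (I k)"
  shows "(\<lambda>j. \<Sum>k<p. \<Sum>i\<in>{0..<n} - I k. c k i * (dI a d (I k) * mIi a n d (I k) i j)) \<in> kerA a n d"
proof -
  have I: "I k \<subseteq> {0..<n}" "card (I k) = d + 1" if "k < p" for k
    using S that by (auto simp: is_simplex_def)
  let ?T = "\<lambda>k i j. c k i * (dI a d (I k) * mIi a n d (I k) i j)"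
  have inR: "in_Rn n (\<lambda>j. \<Sum>k<p. \<Sum>i\<in>{0..<n} - I k. ?T k i j)"
    unfolding in_Rn_def using mIi_out[OF I] by auto
  have row: "(\<Sum>j<n. Amat a r j * (\<Sum>k<p. \<Sum>i\<in>{0..<n} - I k. ?T k i j)) = 0" if r: "r \<le> d" for r
  proof -
    have "(\<Sum>j<n. Amat a r j * (\<Sum>k<p. \<Sum>i\<in>{0..<n} - I k. ?T k i j))
        = (\<Sum>j<n. \<Sum>k<p. \<Sum>i\<in>{0..<n} - I k. Amat a r j * ?T k i j)"
      by (simp add: sum_distrib_left)
    also have "\<dots> = (\<Sum>k<p. \<Sum>j<n. \<Sum>i\<in>{0..<n} - I k. Amat a r j * ?T k i j)"
      by (rule sum.swap)
    also have "\<dots> = (\<Sum>k<p. \<Sum>i\<in>{0..<n} - I k. \<Sum>j<n. Amat a r j * ?T k i j)"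
      by (rule sum.cong[OF refl], rule sum.swap)
    also have "\<dots> = (\<Sum>k<p. \<Sum>i\<in>{0..<n} - I k. c k i * dI a d (I k) * ip n (mIi a n d (I k) i) (Amat a r))"
      unfolding ip_def by (intro sum.cong refl, simp add: sum_distrib_left mult_ac)
    also have "\<dots> = 0"
      using mIi_row[OF I _ r] by (intro sum.neutral ballI) auto
    finally show ?thesis .
  qed
  show ?thesis unfolding kerA_def using inR row by auto
qed


theorem lemma2p2:
  fixes a :: "nat \<Rightarrow> nat \<Rightarrow> int" and n d p :: nat and I :: "nat \<Rightarrow> nat set"
  assumes "n \<ge> d + 2"
    and "\<forall>j<n. \<forall>k<n. j \<noteq> k \<longrightarrow> (\<exists>r<d. a j r \<noteq> a k r)"
    and "full_dim a n d"
    and "p \<ge> 1"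
    and "\<forall>k<p. is_simplex a n d (I k)"
    and "\<exists>h. \<forall>k<p. I k \<in> reg_subdiv a n d h"
  shows "{h. in_Rn n h \<and> (\<forall>k<p. I k \<in> reg_subdiv a n d h)} \<noteq> {}
       \<and> {h. in_Rn n h \<and> (\<forall>k<p. I k \<in> reg_subdiv a n d h)}
         = {h. in_Rn n h \<and> (\<forall>k<p. \<forall>i\<in>{0..<n} - I k.
                 ip n (\<lambda>j. dI a d (I k) * mIi a n d (I k) i j) h > 0)}
       \<and> {x. \<exists>c :: nat \<Rightarrow> nat \<Rightarrow> real. x = (\<lambda>j. \<Sum>k<p. \<Sum>i\<in>{0..<n} - I k.
                 c k i * (dI a d (I k) * mIi a n d (I k) i j))}
         = kerA a n d"
proof (intro conjI)
  note S = assms(5)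
  have Ik: "I k \<subseteq> {0..<n}" "card (I k) = d + 1" "aff_indep a d (I k)" if "k < p" for k
    using S that by (auto simp: is_simplex_def)
  show "{h. in_Rn n h \<and> (\<forall>k<p. I k \<in> reg_subdiv a n d h)} \<noteq> {}"
  proof -
    obtain h where h: "\<forall>k<p. I k \<in> reg_subdiv a n d h" using assms(6) by blast
    define h' where "h' j = (if j < n then h j else 0)" for j
    have "reg_subdiv a n d h' = reg_subdiv a n d h" by (rule reg_cong, simp add: h'_def)
    then have "h' \<in> {h. in_Rn n h \<and> (\<forall>k<p. I k \<in> reg_subdiv a n d h)}"
      using h by (simp add: in_Rn_def h'_def)
    then show ?thesis by blast
  qed
  show "{h. in_Rn n h \<and> (\<forall>k<p. I k \<in> reg_subdiv a n d h)}
         = {h. in_Rn n h \<and> (\<forall>k<p. \<forall>i\<in>{0..<n} - I k.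
                 ip n (\<lambda>j. dI a d (I k) * mIi a n d (I k) i j) h > 0)}"
    using char S by blast
  show "{x. \<exists>c :: nat \<Rightarrow> nat \<Rightarrow> real. x = (\<lambda>j. \<Sum>k<p. \<Sum>i\<in>{0..<n} - I k.
                 c k i * (dI a d (I k) * mIi a n d (I k) i j))}
         = kerA a n d"
  proof (rule equalityI; rule subsetI)
    fix x assume "x \<in> {x. \<exists>c :: nat \<Rightarrow> nat \<Rightarrow> real. x = (\<lambda>j. \<Sum>k<p. \<Sum>i\<in>{0..<n} - I k.
                 c k i * (dI a d (I k) * mIi a n d (I k) i j))}"
    then show "x \<in> kerA a n d" using comb_ker[OF S] by auto
  next
    fix x assume x: "x \<in> kerA a n d"
    have p0: "0 < p" using assms(4) by simp
    note I0 = Ik[OF p0]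
    let ?I = "I 0"
    let ?D = "dI a d ?I"
    have D: "?D \<noteq> 0" using dI_nz[OF I0] .
    define c where "c k i = (if k = 0 then x i / (?D * ?D) else 0)" for k :: nat and i :: nat
    define x' where "x' = (\<lambda>j. \<Sum>k<p. \<Sum>i\<in>{0..<n} - I k. c k i * (dI a d (I k) * mIi a n d (I k) i j))"
    have x'ker: "x' \<in> kerA a n d" unfolding x'_def by (rule comb_ker[OF S])
    have x'eq: "x' j = (\<Sum>i\<in>{0..<n} - ?I. x i / ?D * mIi a n d ?I i j)" for j
    proof -
      have "x' j = (\<Sum>i\<in>{0..<n} - ?I. c 0 i * (?D * mIi a n d ?I i j))"
        unfolding x'_def using p0
        by (subst sum.remove[of _ 0], auto simp: c_def intro!: sum.neutral)
      also have "\<dots> = (\<Sum>i\<in>{0..<n} - ?I. x i / ?D * mIi a n d ?I i j)"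
        unfolding c_def using D by (intro sum.cong refl) (simp add: field_simps)
      finally show ?thesis .
    qed
    have xin: "in_Rn n x" using x by (simp add: kerA_def)
    have out: "x' j = x j" if j: "j \<notin> ?I" for j
    proof (cases "j < n")
      case False
      then show ?thesis using xin mIi_out[OF I0(1,2)] unfolding x'eq in_Rn_def by simp
    next
      case True
      have "x' j = (\<Sum>i\<in>{0..<n} - ?I. if i = j then x j else 0)"
        unfolding x'eq
      proof (intro sum.cong refl)
        fix i assume i: "i \<in> {0..<n} - ?I"
        show "x i / ?D * mIi a n d ?I i j = (if i = j then x j else 0)"
          using mIi_i[OF I0(1,2), of j] mIi_zero[OF I0(1,2), of i j] i j True D by auto
      qed
      also have "\<dots> = x j" using True j by simp
      finally show ?thesis .
    qed
    define y where "y j = x j - x' j" for j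
    have yout: "y j = 0" if "j \<notin> ?I" for j using out[OF that] unfolding y_def by simp
    have yrow: "(\<Sum>j\<in>?I. y j * Amat a r j) = 0" if r: "r \<le> d" for r
    proof -
      have "(\<Sum>j\<in>?I. y j * Amat a r j) = (\<Sum>j<n. Amat a r j * y j)"
        using I0(1) yout by (intro sum.mono_neutral_cong_left) (auto simp: mult.commute)
      also have "\<dots> = (\<Sum>j<n. Amat a r j * x j) - (\<Sum>j<n. Amat a r j * x' j)"
        unfolding y_def by (simp add: algebra_simps sum_subtractf)
      also have "\<dots> = 0" using x x'ker r by (simp add: kerA_def)
      finally show ?thesis .
    qed
    have "\<forall>j\<in>?I. y j = 0"
    proof -
      have A1: "(\<Sum>j\<in>?I. y j) = 0" using yrow[of 0] by (simp add: Amat_def)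
      have A2: "\<forall>r<d. (\<Sum>j\<in>?I. y j * real_of_int (a j r)) = 0"
      proof (intro allI impI)
        fix r assume "r < d"
        then have "(\<Sum>j\<in>?I. y j * Amat a (Suc r) j) = 0" using yrow by simp
        then show "(\<Sum>j\<in>?I. y j * real_of_int (a j r)) = 0" by (simp add: Amat_def)
      qed
      show ?thesis using I0(3) A1 A2 unfolding aff_indep_def by blast
    qed
    then have "x = x'" using yout unfolding y_def by (metis eq_iff_diff_eq_0 ext)
    then show "x \<in> {x. \<exists>c :: nat \<Rightarrow> nat \<Rightarrow> real. x = (\<lambda>j. \<Sum>k<p. \<Sum>i\<in>{0..<n} - I k.
                 c k i * (dI a d (I k) * mIi a n d (I k) i j))}"
      unfolding x'_def by blast
  qed
qed

end
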